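(* Let $\mathsf{Prop}$ be a non-empty set of propositions, $\mathsf{Act}$ a non-empty set of actions, and $\mathsf{L}$ any fragment of $\mathsf{ML}(\mathsf{Prop},\mathsf{Act})$. For every sample $\mathcal{S}=(\mathcal{P},\mathcal{N})$ of Kripke structures in $\mathcal{K}(\mathsf{Prop},\mathsf{Act})$, if there is an $\mathcal{S}$-separating $\mathsf{L}$-formula, then there is one of size at most $2^n$, where $n:=\sum_{K\in\mathcal{P}\cup\mathcal{N}}|Q_K|$.
   Context: $\mathsf{ML}(\mathsf{Prop},\mathsf{Act})$-formulas: $\varphi::=p\mid\neg\varphi\mid\varphi\vee\varphi\mid\varphi\wedge\varphi\mid\langle a\rangle^{\ge k}\varphi\mid[a]\varphi$ with $p\in\mathsf{Prop}$, $a\in\mathsf{Act}$, $k\ge1$. A fragment is given by a subset of these operators (propositions, $\neg$, $\vee$, $\wedge$, each $\langle a\rangle^{\ge k}$, each $[a]$); its formulas are those using only those operators. The size $\mathsf{sz}(\varphi)$ is the number of distinct subformulas of $\varphi$. $\mathcal{K}(\mathsf{Prop},\mathsf{Act})$: Kripke structures $K=(Q,I,A,\delta,P,\pi)$ with $Q=Q_K$ a finite non-empty set of states, $I\subseteq Q$ non-empty set of initial states, $A\subseteq\mathsf{Act}$ non-empty, $\delta:Q\times A\to2^Q$ (with $\delta(q,a)=\emptyset$ for $a\notin A$), $P\subseteq\mathsf{Prop}$, $\pi:Q\to2^P$. Semantics: $q\models p$ iff $p\in\pi(q)$; Boolean connectives as usual; $q\models[a]\varphi$ iff $\delta(q,a)\subseteq\{q':q'\models\varphi\}$;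 $q\models\langle a\rangle^{\ge k}\varphi$ iff $|\delta(q,a)\cap\{q':q'\models\varphi\}|\ge k$; $K\models\varphi$ iff $q\models\varphi$ for all $q\in I$. A sample is a pair $(\mathcal{P},\mathcal{N})$ of finite sets of such structures; a formula is $\mathcal{S}$-separating if satisfied by every structure in $\mathcal{P}$ and by none in $\mathcal{N}$. *)

theory Defs
  imports Main
begin

datatype ('p, 'a) fml =
    Atom 'p
  | Neg "('p, 'a) fml"
  | Or "('p, 'a) fml" "('p, 'a) fml"
  | And "('p, 'a) fml" "('p, 'a) fml"
  | Dia 'a nat "('p, 'a) fml"
  | Box 'a "('p, 'a) fml"

fun is_ml :: "'p set \<Rightarrow> 'a set \<Rightarrow> ('p, 'a) fml \<Rightarrow> bool" where
  "is_ml Pr Ac (Atom p) = (p \<in> Pr)"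
| "is_ml Pr Ac (Neg f) = is_ml Pr Ac f"
| "is_ml Pr Ac (Or f g) = (is_ml Pr Ac f \<and> is_ml Pr Ac g)"
| "is_ml Pr Ac (And f g) = (is_ml Pr Ac f \<and> is_ml Pr Ac g)"
| "is_ml Pr Ac (Dia a k f) = (a \<in> Ac \<and> k \<ge> 1 \<and> is_ml Pr Ac f)"
| "is_ml Pr Ac (Box a f) = (a \<in> Ac \<and> is_ml Pr Ac f)"

datatype 'a oper = OProp | ONeg | OOr | OAnd | ODia 'a nat | OBox 'a

text \<open>All operators of ML(Prop,Act); a fragment is any subset of these.\<close>
definition ml_ops :: "'a set \<Rightarrow> 'a oper set" where
  "ml_ops Ac = {OProp, ONeg, OOr, OAnd} \<union> {ODia a k | a k. a \<in> Ac \<and> k \<ge> 1} \<union> {OBox a | a. a \<in> Ac}"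

fun ops :: "('p, 'a) fml \<Rightarrow> 'a oper set" where
  "ops (Atom p) = {OProp}"
| "ops (Neg f) = insert ONeg (ops f)"
| "ops (Or f g) = insert OOr (ops f \<union> ops g)"
| "ops (And f g) = insert OAnd (ops f \<union> ops g)"
| "ops (Dia a k f) = insert (ODia a k) (ops f)"
| "ops (Box a f) = insert (OBox a) (ops f)"

definition in_frag :: "'p set \<Rightarrow> 'a set \<Rightarrow> 'a oper set \<Rightarrow> ('p, 'a) fml \<Rightarrow> bool" where
  "in_frag Pr Ac L f \<longleftrightarrow> is_ml Pr Ac f \<and> ops f \<subseteq> L"

fun subfmls :: "('p, 'a) fml \<Rightarrow> ('p, 'a) fml set" where
  "subfmls (Atom p) = {Atom p}"
| "subfmls (Neg f) = insert (Neg f) (subfmls f)"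
| "subfmls (Or f g) = insert (Or f g) (subfmls f \<union> subfmls g)"
| "subfmls (And f g) = insert (And f g) (subfmls f \<union> subfmls g)"
| "subfmls (Dia a k f) = insert (Dia a k f) (subfmls f)"
| "subfmls (Box a f) = insert (Box a f) (subfmls f)"

definition sz :: "('p, 'a) fml \<Rightarrow> nat" where
  "sz f = card (subfmls f)"

record ('s, 'a, 'p) kripke =
  states :: "'s set"
  init :: "'s set"
  acts :: "'a set"
  trans :: "'s \<Rightarrow> 'a \<Rightarrow> 's set"
  props :: "'p set"
  lab :: "'s \<Rightarrow> 'p set"

definition is_kripke :: "'p set \<Rightarrow> 'a set \<Rightarrow> ('s, 'a, 'p) kripke \<Rightarrow> bool" where
  "is_kripke Pr Ac K \<longleftrightarrow>
     finite (states K) \<and> states K \<noteq> {} \<and>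
     init K \<subseteq> states K \<and> init K \<noteq> {} \<and>
     acts K \<subseteq> Ac \<and> acts K \<noteq> {} \<and>
     (\<forall>q \<in> states K. \<forall>a \<in> acts K. trans K q a \<subseteq> states K) \<and>
     (\<forall>q a. a \<notin> acts K \<longrightarrow> trans K q a = {}) \<and>
     props K \<subseteq> Pr \<and>
     (\<forall>q \<in> states K. lab K q \<subseteq> props K)"

fun sat :: "('s, 'a, 'p) kripke \<Rightarrow> 's \<Rightarrow> ('p, 'a) fml \<Rightarrow> bool" where
  "sat K q (Atom p) = (p \<in> lab K q)"
| "sat K q (Neg f) = (\<not> sat K q f)"
| "sat K q (Or f g) = (sat K q f \<or> sat K q g)"
| "sat K q (And f g) = (sat K q f \<and> sat K q g)"
| "sat K q (Box a f) = (trans K q a \<subseteq> {q'. sat K q' f})"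
| "sat K q (Dia a k f) = (card (trans K q a \<inter> {q'. sat K q' f}) \<ge> k)"

definition models :: "('s, 'a, 'p) kripke \<Rightarrow> ('p, 'a) fml \<Rightarrow> bool" where
  "models K f \<longleftrightarrow> (\<forall>q \<in> init K. sat K q f)"

definition separating :: "('s, 'a, 'p) kripke set \<Rightarrow> ('s, 'a, 'p) kripke set \<Rightarrow> ('p, 'a) fml \<Rightarrow> bool" where
  "separating Pos Ng f \<longleftrightarrow> (\<forall>K \<in> Pos. models K f) \<and> (\<forall>K \<in> Ng. \<not> models K f)"

end

theory Submission
  imports Defs
begin

primrec repl :: "('p,'a) fml \<Rightarrow> ('p,'a) fml \<Rightarrow> ('p,'a) fml \<Rightarrow> ('p,'a) fml" where
  "repl g h (Atom p) = (if Atom p = g then h else Atom p)"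
| "repl g h (Neg f) = (if Neg f = g then h else Neg (repl g h f))"
| "repl g h (Or f1 f2) = (if Or f1 f2 = g then h else Or (repl g h f1) (repl g h f2))"
| "repl g h (And f1 f2) = (if And f1 f2 = g then h else And (repl g h f1) (repl g h f2))"
| "repl g h (Dia a k f) = (if Dia a k f = g then h else Dia a k (repl g h f))"
| "repl g h (Box a f) = (if Box a f = g then h else Box a (repl g h f))"

lemma self_sub: "f \<in> subfmls f"
  by (cases f) auto

lemma finite_sub: "finite (subfmls f)"
  by (induction f) auto

lemma sub_trans: "g \<in> subfmls f \<Longrightarrow> subfmls g \<subseteq> subfmls f"
  by (induction f) auto

lemma sub_size: "g \<in> subfmls f \<Longrightarrow> size g < size f \<or> g = f"
  by (induction f) auto

lemma sub_antisym: "g \<in> subfmls h \<Longrightarrow> h \<in> subfmls g \<Longrightarrow> g = h"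
  by (metis sub_size less_asym)

lemma repl_id: "g \<notin> subfmls f \<Longrightarrow> repl g h f = f"
  by (induction f) (auto simp: self_sub)

lemma repl_sub: "g \<notin> subfmls h \<Longrightarrow> subfmls (repl g h f) \<subseteq> repl g h ` subfmls f \<union> subfmls h"
proof (induction f)
  case (Atom x) then show ?case by auto
next
  case (Neg f)
  show ?case
  proof (cases "Neg f = g")
    case False
    have "subfmls (repl g h f) \<subseteq> repl g h ` subfmls (Neg f) \<union> subfmls h" using Neg by auto
    then show ?thesis using False by simp
  next
    case True
    then have "repl g h (Neg f) = h" by (simp add: True[symmetric])
    then show ?thesis by auto
  qed
next
  case (Or f1 f2)
  show ?case
  proof (cases "Or f1 f2 = g")
    case False
    have "subfmls (repl g h f1) \<subseteq> repl g h ` subfmls (Or f1 f2) \<union> subfmls h" using Or by auto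
    moreover have "subfmls (repl g h f2) \<subseteq> repl g h ` subfmls (Or f1 f2) \<union> subfmls h" using Or by auto
    ultimately show ?thesis using False by simp
  next
    case True
    then have "repl g h (Or f1 f2) = h" by (simp add: True[symmetric])
    then show ?thesis by auto
  qed
next
  case (And f1 f2)
  show ?case
  proof (cases "And f1 f2 = g")
    case False
    have "subfmls (repl g h f1) \<subseteq> repl g h ` subfmls (And f1 f2) \<union> subfmls h" using And by auto
    moreover have "subfmls (repl g h f2) \<subseteq> repl g h ` subfmls (And f1 f2) \<union> subfmls h" using And by auto
    ultimately show ?thesis using False by simp
  next
    case True
    then have "repl g h (And f1 f2) = h" by (simp add: True[symmetric])
    then show ?thesis by auto
  qed
next
  case (Dia a k f)
  show ?case
  proof (cases "Dia a k f = g")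
    case False
    have "subfmls (repl g h f) \<subseteq> repl g h ` subfmls (Dia a k f) \<union> subfmls h" using Dia by auto
    then show ?thesis using False by simp
  next
    case True
    then have "repl g h (Dia a k f) = h" by (simp add: True[symmetric])
    then show ?thesis by auto
  qed
next
  case (Box a f)
  show ?case
  proof (cases "Box a f = g")
    case False
    have "subfmls (repl g h f) \<subseteq> repl g h ` subfmls (Box a f) \<union> subfmls h" using Box by auto
    then show ?thesis using False by simp
  next
    case True
    then have "repl g h (Box a f) = h" by (simp add: True[symmetric])
    then show ?thesis by auto
  qed
qed

lemma sub_ops: "g \<in> subfmls f \<Longrightarrow> ops g \<subseteq> ops f"
  by (induction f) auto

lemma sub_ml: "g \<in> subfmls f \<Longrightarrow> is_ml Pr Ac f \<Longrightarrow> is_ml Pr Ac g"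
  by (induction f) auto

lemma repl_ops: "ops (repl g h f) \<subseteq> ops f \<union> ops h"
  by (induction f) auto

lemma repl_ml: "is_ml Pr Ac f \<Longrightarrow> is_ml Pr Ac h \<Longrightarrow> is_ml Pr Ac (repl g h f)"
  by (induction f) auto

lemma repl_sat:
  assumes K: "is_kripke Pr Ac K"
    and eq: "\<forall>q \<in> states K. sat K q g = sat K q h"
  shows "q \<in> states K \<Longrightarrow> sat K q (repl g h f) = sat K q f"
proof (induction f arbitrary: q)
  case (Dia a k f)
  have "trans K q a \<subseteq> states K"
    using K Dia.prems unfolding is_kripke_def by (cases "a \<in> acts K") auto
  then have "trans K q a \<inter> {q'. sat K q' (repl g h f)} = trans K q a \<inter> {q'. sat K q' f}"
    using Dia.IH by auto
  then show ?case using eq Dia.prems by auto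
next
  case (Box a f)
  have "trans K q a \<subseteq> states K"
    using K Box.prems unfolding is_kripke_def by (cases "a \<in> acts K") auto
  then have "(trans K q a \<subseteq> {q'. sat K q' (repl g h f)}) = (trans K q a \<subseteq> {q'. sat K q' f})"
    using Box.IH by auto
  then show ?case using eq Box.prems by (cases "Box a f = g") auto
next
  case (Atom p) then show ?case using eq by (cases "Atom p = g") auto
next
  case (Neg f) then show ?case using eq by (cases "Neg f = g") auto
next
  case (Or f1 f2) then show ?case using eq by (cases "Or f1 f2 = g") auto
next
  case (And f1 f2) then show ?case using eq by (cases "And f1 f2 = g") auto
qed

theorem corollary1:
  fixes Pr :: "'p set" and Ac :: "'a set" and L :: "'a oper set"
    and Pos Ng :: "('s, 'a, 'p) kripke set"
  assumes "Pr \<noteq> {}" and "Ac \<noteq> {}"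
    and "L \<subseteq> ml_ops Ac"
    and "finite Pos" and "finite Ng"
    and "\<forall>K \<in> Pos \<union> Ng. is_kripke Pr Ac K"
    and "\<exists>f. in_frag Pr Ac L f \<and> separating Pos Ng f"
  shows "\<exists>f. in_frag Pr Ac L f \<and> separating Pos Ng f \<and>
           sz f \<le> 2 ^ (\<Sum>K \<in> Pos \<union> Ng. card (states K))"
proof -
  define P where "P f \<longleftrightarrow> in_frag Pr Ac L f \<and> separating Pos Ng f" for f
  obtain f0 where "P f0" using assms(7) P_def by blast
  then obtain f where Pf: "P f" and minf: "\<forall>g. P g \<longrightarrow> sz f \<le> sz g"
    using ex_has_least_nat[of P f0 sz] by blast
  define S where "S = Pos \<union> Ng"
  define D where "D = Sigma S states"
  define sem where "sem \<phi> = {(K,q). K \<in> S \<and> q \<in> states K \<and> sat K q \<phi>}" for \<phi>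
  have inj: "inj_on sem (subfmls f)"
  proof (rule inj_onI, rule ccontr)
    fix g0 h0 assume g0: "g0 \<in> subfmls f" and h0: "h0 \<in> subfmls f"
      and se: "sem g0 = sem h0" and ne: "g0 \<noteq> h0"
    have "g0 \<notin> subfmls h0 \<or> h0 \<notin> subfmls g0" using sub_antisym ne by blast
    then obtain g h where gh: "g \<in> subfmls f" "h \<in> subfmls f" "sem g = sem h" "g \<noteq> h"
      "g \<notin> subfmls h"
    proof
      assume "g0 \<notin> subfmls h0" then show ?thesis using that[of g0 h0] g0 h0 se ne by blast
    next
      assume "h0 \<notin> subfmls g0" then show ?thesis using that[of h0 g0] g0 h0 se ne by metis
    qed
    have eqs: "\<forall>K \<in> S. \<forall>q \<in> states K. sat K q g = sat K q h"
      using gh(3) unfolding sem_def set_eq_iff by blast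
    define f' where "f' = repl g h f"
    have satf: "\<forall>K \<in> S. \<forall>q \<in> states K. sat K q f' = sat K q f"
    proof (intro ballI)
      fix K q assume "K \<in> S" "q \<in> states K"
      then show "sat K q f' = sat K q f"
        unfolding f'_def using repl_sat[of Pr Ac K g h q f] assms(6) eqs S_def by blast
    qed
    have "\<forall>K \<in> S. models K f' = models K f"
    proof
      fix K assume K: "K \<in> S"
      then have "init K \<subseteq> states K" using assms(6) unfolding S_def is_kripke_def by blast
      then show "models K f' = models K f" using satf K unfolding models_def by blast
    qed
    then have sep: "separating Pos Ng f'"
      using Pf unfolding P_def separating_def S_def by auto
    have "in_frag Pr Ac L f'"
      using Pf unfolding P_def in_frag_def f'_def
      using repl_ml[of Pr Ac f h g] sub_ml[OF gh(2)] repl_ops[of g h f] sub_ops[OF gh(2)]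
      by blast
    then have Pf': "P f'" using sep P_def by blast
    have hfix: "\<forall>\<psi> \<in> subfmls h. repl g h \<psi> = \<psi>"
      using repl_id sub_trans gh(5) by blast
    have "subfmls h \<subseteq> repl g h ` subfmls f"
    proof
      fix \<psi> assume "\<psi> \<in> subfmls h"
      then show "\<psi> \<in> repl g h ` subfmls f"
        using hfix sub_trans[OF gh(2)] by (metis image_eqI subsetD)
    qed
    then have sub: "subfmls f' \<subseteq> repl g h ` subfmls f"
      using repl_sub[OF gh(5), of f] unfolding f'_def by blast
    have rg: "repl g h g = h" by (cases g) auto
    have rh: "repl g h h = h" using repl_id gh(5) by blast
    have "card (repl g h ` subfmls f) < card (subfmls f)"
    proof -
      have "repl g h ` subfmls f = repl g h ` (subfmls f - {g})"
      proof
        show "repl g h ` (subfmls f - {g}) \<subseteq> repl g h ` subfmls f" by blast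
        show "repl g h ` subfmls f \<subseteq> repl g h ` (subfmls f - {g})"
        proof
          fix x assume "x \<in> repl g h ` subfmls f"
          then obtain y where y: "y \<in> subfmls f" "x = repl g h y" by blast
          show "x \<in> repl g h ` (subfmls f - {g})"
          proof (cases "y = g")
            case True
            then have "x = repl g h h" using y rg rh by simp
            then show ?thesis using gh(2,4) by blast
          next
            case False then show ?thesis using y by blast
          qed
        qed
      qed
      also have "card \<dots> \<le> card (subfmls f - {g})"
        using card_image_le finite_sub by blast
      also have "\<dots> < card (subfmls f)"
        using card_Diff1_less[OF finite_sub gh(1)] by simp
      finally show ?thesis .
    qed
    moreover have "card (subfmls f') \<le> card (repl g h ` subfmls f)"
      by (rule card_mono[OF finite_imageI[OF finite_sub] sub])
    ultimately have "sz f' < sz f" unfolding sz_def by linarith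
    then show False using minf Pf' by fastforce
  qed
  have finS: "finite S" using assms(4,5) S_def by simp
  have finst: "\<forall>K \<in> S. finite (states K)"
  proof
    fix K assume "K \<in> S"
    then have "is_kripke Pr Ac K" using assms(6) S_def by blast
    then show "finite (states K)" unfolding is_kripke_def by simp
  qed
  have finD: "finite D" unfolding D_def using finS finst by (simp add: finite_SigmaI)
  have "sem ` subfmls f \<subseteq> Pow D" unfolding sem_def D_def by auto
  then have "card (sem ` subfmls f) \<le> card (Pow D)"
    using finD by (simp add: card_mono)
  also have "\<dots> = 2 ^ card D" using finD by (simp add: card_Pow)
  also have "card D = (\<Sum>K \<in> S. card (states K))"
    unfolding D_def using finS finst by (simp add: card_SigmaI)
  finally have "sz f \<le> 2 ^ (\<Sum>K \<in> S. card (states K))"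
    unfolding sz_def using card_image[OF inj] by simp
  then show ?thesis using Pf P_def S_def by blast
qed

end
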